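(* Let $s,d\geq1$ be integers and $n=v_2(2d)$. The maximum of $v_2(S(s,Z))$, as $Z$ ranges over number fields of degree $2d$, is attained by an extension of degree $\frac{2d}{2^n}$ of $\mathbf{Q}(\mu_{2^{n+1}})$ with $Z^{(2)}=\mathbf{Q}(\mu_{2^{n+1}})$. Moreover this maximum is attained only if $Z^{(2)}=\mathbf{Q}(\mu_{2^{n+1}})$.
   Context: For a number field $F$ and a prime $p$: $\mu_{p^m}$ is the group of $p^m$-th roots of unity, $\mathbf{Q}(\mu_{p^\infty})=\bigcup_m\mathbf{Q}(\mu_{p^m})$, $F^{(p)}=F\cap\mathbf{Q}(\mu_{p^\infty})$, $m(F,p)=\inf\{m\geq1\mid F^{(p)}\subset\mathbf{Q}(\mu_{p^m}),\ p^m\neq2\}$ and $t(F,p)=[\mathbf{Q}(\mu_{p^{m(F,p)}}):F^{(p)}]$. For an integer $N$, $N_p=p^{v_p(N)}$. The Schur bound is $$S(s,F)=2^{s-\lfloor s/t(F,2)\rfloor}\prod_{p\ \mathrm{prime}}p^{m(F,p)\lfloor s/t(F,p)\rfloor}\Big(\big\lfloor \tfrac{s}{t(F,p)}\big\rfloor!\Big)_p.$$ *)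

theory Defs
  imports "HOL-Algebra.Algebra" "HOL-Computational_Algebra.Primes" "HOL-Library.Discrete_Functions"
begin

definition CC :: "complex ring" where
  "CC = \<lparr>carrier = UNIV, monoid.mult = (*), one = 1, ring.zero = 0, ring.add = (+)\<rparr>"

definition number_field :: "complex set \<Rightarrow> bool" where
  "number_field F \<longleftrightarrow> subfield F CC \<and> (\<exists>n. ring.dimension CC n \<rat> F)"

definition has_degree :: "complex set \<Rightarrow> nat \<Rightarrow> bool" where
  "has_degree F n \<longleftrightarrow> ring.dimension CC n \<rat> F"

definition rel_degree :: "complex set \<Rightarrow> complex set \<Rightarrow> nat" where
  "rel_degree E K = (THE n. ring.dimension CC n K E)"

definition mu :: "nat \<Rightarrow> complex set" where
  "mu n = {z. z ^ n = 1}"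

definition cyc :: "nat \<Rightarrow> complex set" where
  "cyc n = generate_field CC (mu n)"

definition cyc_inf :: "nat \<Rightarrow> complex set" where
  "cyc_inf p = (\<Union>m. cyc (p ^ m))"

definition Fp :: "complex set \<Rightarrow> nat \<Rightarrow> complex set" where
  "Fp F p = F \<inter> cyc_inf p"

definition m_idx :: "complex set \<Rightarrow> nat \<Rightarrow> nat" where
  "m_idx F p = Inf {m. m \<ge> 1 \<and> Fp F p \<subseteq> cyc (p ^ m) \<and> p ^ m \<noteq> 2}"

definition t_idx :: "complex set \<Rightarrow> nat \<Rightarrow> nat" where
  "t_idx F p = rel_degree (cyc (p ^ m_idx F p)) (Fp F p)"

definition ppart :: "nat \<Rightarrow> nat \<Rightarrow> nat" where
  "ppart N p = p ^ multiplicity p N"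

definition schur_factor :: "nat \<Rightarrow> complex set \<Rightarrow> nat \<Rightarrow> nat" where
  "schur_factor s F p =
     p ^ (m_idx F p * (s div t_idx F p)) * ppart (fact (s div t_idx F p)) p"

text \<open>The product over all primes; only finitely many factors differ from 1 for a
  number field, so we take the product over those primes.\<close>
definition schur_bound :: "nat \<Rightarrow> complex set \<Rightarrow> nat" where
  "schur_bound s F =
     2 ^ (s - s div t_idx F 2) *
     (\<Prod>p \<in> {p. Factorial_Ring.prime p \<and> schur_factor s F p \<noteq> 1}. schur_factor s F p)"

end

theory Submission
  imports Defs "Berlekamp_Zassenhaus.Factor_Bound"
begin


lemma CC_simps [simp]: "carrier CC = UNIV" "monoid.mult CC = (*)" "one CC = 1" "ring.zero CC = 0" "ring.add CC = (+)"
  by (simp_all add: CC_def)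

lemma field_CC: "field CC"
proof -
  have "\<exists>y. x + y = 0" for x :: complex
    using add.right_inverse by blast
  moreover have "x \<noteq> 0 \<Longrightarrow> \<exists>y. x * y = 1" for x :: complex
    by (rule exI[of _ "inverse x"]) auto
  ultimately show ?thesis
    unfolding CC_def using add.right_inverse
    by unfold_locales (auto simp:algebra_simps Units_def)
qed

lemma CC_a_inv [simp]: "a_inv CC x = - x"
proof - interpret C: field CC by (rule field_CC)
  show ?thesis using C.add.inv_equality[of "-x" x] by simp qed
lemma CC_minus [simp]: "a_minus CC x y = x - y"
  by (simp add: a_minus_def)
lemma CC_inv [simp]: "x \<noteq> 0 \<Longrightarrow> inv\<^bsub>CC\<^esub> x = inverse x"
proof - interpret C: field CC by (rule field_CC)
  show "x \<noteq> 0 \<Longrightarrow> inv\<^bsub>CC\<^esub> x = inverse x" using C.comm_inv_char[of x "inverse x"] by simp qed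
lemma CC_pow [simp]: "x [^]\<^bsub>CC\<^esub> (n::nat) = x ^ n"
  by (induct n) (simp_all add: mult.commute)


lemma subfield_CC_iff:
  "subfield K CC \<longleftrightarrow> 1 \<in> K \<and> (\<forall>x\<in>K. -x \<in> K) \<and> (\<forall>x\<in>K. \<forall>y\<in>K. x*y \<in> K) \<and>
     (\<forall>x\<in>K. \<forall>y\<in>K. x+y \<in> K) \<and> (\<forall>x\<in>K. x \<noteq> 0 \<longrightarrow> inverse x \<in> K)"
proof -
  interpret C: field CC by (rule field_CC)
  show ?thesis
  proof
    assume K: "subfield K CC"
    note E = subringE[OF subfieldE(1)[OF K]]
    have "\<forall>x\<in>K. x \<noteq> 0 \<longrightarrow> inverse x \<in> K"
      using C.subfield_m_inv(1)[OF K] by auto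
    with E show "1 \<in> K \<and> (\<forall>x\<in>K. -x \<in> K) \<and> (\<forall>x\<in>K. \<forall>y\<in>K. x*y \<in> K) \<and>
     (\<forall>x\<in>K. \<forall>y\<in>K. x+y \<in> K) \<and> (\<forall>x\<in>K. x \<noteq> 0 \<longrightarrow> inverse x \<in> K)" by auto
  next
    assume A: "1 \<in> K \<and> (\<forall>x\<in>K. -x \<in> K) \<and> (\<forall>x\<in>K. \<forall>y\<in>K. x*y \<in> K) \<and>
     (\<forall>x\<in>K. \<forall>y\<in>K. x+y \<in> K) \<and> (\<forall>x\<in>K. x \<noteq> 0 \<longrightarrow> inverse x \<in> K)"
    show "subfield K CC"
      by (rule C.subfieldI'[OF C.subringI]) (use A in auto)
  qed
qed

lemma subfieldD:
  assumes "subfield K CC"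
  shows "1 \<in> K" "0 \<in> K" "x \<in> K \<Longrightarrow> -x \<in> K" "x \<in> K \<Longrightarrow> y \<in> K \<Longrightarrow> x*y \<in> K"
    "x \<in> K \<Longrightarrow> y \<in> K \<Longrightarrow> x+y \<in> K" "x \<in> K \<Longrightarrow> y \<in> K \<Longrightarrow> x-y \<in> K"
    "x \<in> K \<Longrightarrow> inverse x \<in> K" "x \<in> K \<Longrightarrow> y \<in> K \<Longrightarrow> x/y \<in> K"
    "x \<in> K \<Longrightarrow> x ^ n \<in> K"
proof -
  note A = assms[unfolded subfield_CC_iff]
  show 1: "1 \<in> K" using A by auto
  show 0: "0 \<in> K" using A by (metis add.right_inverse)
  show "x \<in> K \<Longrightarrow> -x \<in> K" using A by auto
  show "x \<in> K \<Longrightarrow> y \<in> K \<Longrightarrow> x*y \<in> K" using A by auto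
  show "x \<in> K \<Longrightarrow> y \<in> K \<Longrightarrow> x+y \<in> K" using A by auto
  show "x \<in> K \<Longrightarrow> y \<in> K \<Longrightarrow> x-y \<in> K" using A by (metis diff_conv_add_uminus)
  have inv: "\<And>z. z \<in> K \<Longrightarrow> inverse z \<in> K" using A 0 by (case_tac "z = 0") auto
  then show "x \<in> K \<Longrightarrow> inverse x \<in> K" .
  show "x \<in> K \<Longrightarrow> y \<in> K \<Longrightarrow> x/y \<in> K" using A inv[of y] by (simp add: divide_inverse)
  show "x \<in> K \<Longrightarrow> x ^ n \<in> K" using A 1 by (induct n) auto
qed

lemma subfield_Rats: "subfield \<rat> CC"
  unfolding subfield_CC_iff by (auto simp: Rats_inverse)

lemma Rats_subset_subfield:
  assumes K: "subfield K CC" shows "\<rat> \<subseteq> K"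
proof
  fix q :: complex assume "q \<in> \<rat>"
  then obtain a b where q: "q = of_int a / of_int b" by (auto elim: Rats_cases')
  have nat: "of_nat n \<in> K" for n
    by (induct n) (auto intro: subfieldD[OF K])
  have int: "of_int i \<in> K" for i
  proof (cases "i \<ge> 0")
    case True then show ?thesis using nat[of "nat i"] by simp
  next
    case False then show ?thesis using subfieldD(3)[OF K nat[of "nat (-i)"]] by simp
  qed
  show "q \<in> K" unfolding q by (intro subfieldD(8)[OF K] int)
qed

interpretation ratc: map_poly_idom_hom "of_rat :: rat \<Rightarrow> complex" ..

lemma test_hom: "map_poly (of_rat::rat\<Rightarrow>complex) (a*b + c) = map_poly of_rat a * map_poly of_rat b + map_poly of_rat c"
  by (simp add: hom_distribs)

lemma eval_CC: "ring.eval CC p x = poly (Poly (rev p)) x"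
proof -
  interpret C: field CC by (rule field_CC)
  show ?thesis
  proof (induct p)
    case Nil show ?case by simp
  next
    case (Cons a p)
    have "C.eval (a # p) x = a * x ^ length p + C.eval p x" by simp
    also have "\<dots> = poly (Poly (rev (a#p))) x" using Cons by (simp add: Poly_append poly_monom)
    finally show ?case .
  qed
qed

lemma list_of_ratpoly:
  fixes f :: "rat poly" assumes "f \<noteq> 0"
  shows "rev (map of_rat (coeffs f)) \<in> carrier (univ_poly CC \<rat>)"
    "rev (map of_rat (coeffs f)) \<noteq> []"
    "length (rev (map of_rat (coeffs f)) :: complex list) - 1 = degree f"
    "ring.eval CC (rev (map of_rat (coeffs f))) x = poly (map_poly of_rat f) x"
proof -
  have lc: "last (coeffs f) \<noteq> 0" using assms by (simp add: last_coeffs_eq_coeff_degree)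
  have ne: "coeffs f \<noteq> []" using assms by simp
  show "rev (map of_rat (coeffs f)) \<in> carrier (univ_poly CC \<rat>)"
    unfolding univ_poly_carrier[symmetric] polynomial_def
    using lc ne by (auto simp: hd_rev last_map)
  show "rev (map of_rat (coeffs f)) \<noteq> []" using ne by simp
  show "length (rev (map of_rat (coeffs f)) :: complex list) - 1 = degree f"
    by (simp add: degree_eq_length_coeffs)
  show "ring.eval CC (rev (map of_rat (coeffs f))) x = poly (map_poly of_rat f) x"
    unfolding eval_CC by (simp add: map_poly_def)
qed

lemma ratpoly_of_list:
  assumes "p \<in> carrier (univ_poly CC \<rat>)" "p \<noteq> []"
  shows "\<exists>g::rat poly. g \<noteq> 0 \<and> degree g = length p - 1 \<and> (\<forall>x. poly (map_poly of_rat g) x = ring.eval CC p x)"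
proof -
  have P: "set p \<subseteq> \<rat>" "hd p \<noteq> 0"
    using assms unfolding univ_poly_carrier[symmetric] polynomial_def by auto
  have "\<forall>y\<in>set p. \<exists>r. y = of_rat r" using P(1) by (auto elim: Rats_cases)
  then have "\<exists>rs. p = map of_rat rs" by (simp add: ex_map_conv)
  then obtain rs where rs: "p = map of_rat rs" by blast
  have rsne: "rs \<noteq> []" using assms(2) rs by auto
  have hd: "hd rs \<noteq> 0" using P(2) rs rsne by (auto simp: hd_map)
  define g where "g = Poly (rev rs)"
  have cg: "coeffs g = rev rs"
    unfolding g_def coeffs_Poly using hd rsne
    by (cases rs) (auto simp: strip_while_def)
  have "g \<noteq> 0" using cg rsne by auto
  moreover have "degree g = length p - 1" using cg rs by (simp add: degree_eq_length_coeffs)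
  moreover have "poly (map_poly of_rat g) x = ring.eval CC p x" for x
  proof -
    have "map_poly (of_rat :: rat \<Rightarrow> complex) g = Poly (rev p)"
      unfolding map_poly_def cg rs by (simp add: rev_map)
    then show ?thesis by (simp add: eval_CC)
  qed
  ultimately show ?thesis by blast
qed

definition irr_rat :: "rat poly \<Rightarrow> bool" where
  "irr_rat f \<longleftrightarrow> degree f \<ge> 1 \<and> (\<forall>g h. f = g * h \<longrightarrow> degree g = 0 \<or> degree h = 0)"

lemma irr_ratD: "irr_rat f \<Longrightarrow> f = a * b \<Longrightarrow> degree a = 0 \<or> degree b = 0"
  unfolding irr_rat_def by (elim conjE allE[where x=a] allE[where x=b]) simp

lemma irr_root_degree_le:
  fixes x :: complex
  assumes irr: "irr_rat f" and g0: "g \<noteq> 0"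
    and fx: "poly (map_poly of_rat f) x = 0" and gx: "poly (map_poly of_rat g) x = 0"
  shows "degree f \<le> degree g"
proof -
  define h where "h = gcd f g"
  have hx: "poly (map_poly of_rat h) x = 0"
  proof -
    have "h = fst (bezout_coefficients f g) * f + snd (bezout_coefficients f g) * g"
      unfolding h_def by (simp add: bezout_coefficients_fst_snd)
    then show ?thesis using fx gx by (simp add: hom_distribs)
  qed
  have h0: "h \<noteq> 0" unfolding h_def using g0 by simp
  obtain k where fk: "f = h * k" unfolding h_def by (meson gcd_dvd1 dvdE)
  have "degree h = 0 \<or> degree k = 0" using irr_ratD[OF irr fk] .
  then show ?thesis
  proof
    assume "degree h = 0"
    then obtain c where "h = [:c:]" by (meson degree_eq_zeroE)
    with h0 hx show ?thesis by simp
  next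
    assume dk: "degree k = 0"
    have "k \<noteq> 0" using fk irr unfolding irr_rat_def by auto
    then have "degree f = degree h" using fk dk h0 by (simp add: degree_mult_eq)
    also have "\<dots> \<le> degree g" using g0 unfolding h_def by (intro dvd_imp_degree_le) auto
    finally show ?thesis .
  qed
qed

lemma eisenstein_aux:
  fixes g h :: "int poly" and q :: int
  assumes q: "Factorial_Ring.prime q" and cf: "\<forall>i<degree (g*h). q dvd coeff (g*h) i"
    and g0: "q dvd coeff g 0" and h0: "\<not> q dvd coeff h 0" and lg: "\<not> q dvd lead_coeff g"
    and gnz: "g \<noteq> 0" and hnz: "h \<noteq> 0"
  shows "degree h = 0"
proof -
  define r where "r = (LEAST i. \<not> q dvd coeff g i)"
  have r1: "\<not> q dvd coeff g r" unfolding r_def by (rule LeastI[of _ "degree g"]) (use lg in auto)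
  have r2: "r \<le> degree g" unfolding r_def by (rule Least_le) (use lg in auto)
  have r3: "\<And>i. i < r \<Longrightarrow> q dvd coeff g i" unfolding r_def using not_less_Least by blast
  have "coeff (g*h) r = (\<Sum>i<Suc r. coeff g i * coeff h (r - i))"
    by (simp add: coeff_mult lessThan_Suc_atMost)
  also have "\<dots> = (\<Sum>i<r. coeff g i * coeff h (r - i)) + coeff g r * coeff h 0" by simp
  finally have eq: "coeff (g*h) r = (\<Sum>i<r. coeff g i * coeff h (r - i)) + coeff g r * coeff h 0" .
  have d1: "q dvd (\<Sum>i<r. coeff g i * coeff h (r - i))"
    by (intro dvd_sum) (simp add: r3)
  have "\<not> q dvd coeff (g*h) r"
  proof
    assume "q dvd coeff (g*h) r"
    with eq d1 have "q dvd coeff g r * coeff h 0" by (metis dvd_add_right_iff)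
    with q r1 h0 show False by (simp add: prime_dvd_mult_iff)
  qed
  with cf have "degree (g*h) \<le> r" by (meson not_less)
  with r2 show ?thesis using gnz hnz by (simp add: degree_mult_eq)
qed

lemma eisenstein_irr:
  fixes f :: "int poly" and q :: int
  assumes q: "Factorial_Ring.prime q" and lf: "lead_coeff f = 1" and df: "degree f \<ge> 1"
    and cf: "\<forall>i<degree f. q dvd coeff f i" and c0: "\<not> q^2 dvd coeff f 0"
  shows "irr_rat (map_poly rat_of_int f)"
  unfolding irr_rat_def
proof (intro conjI allI impI)
  show "1 \<le> degree (map_poly rat_of_int f)" using df by simp
  fix g h assume gh: "map_poly rat_of_int f = g * h"
  from rat_to_int_factor[OF gh] obtain g' h' where
    fgh: "f = g' * h'" and dg: "degree g' = degree g" and dh: "degree h' = degree h" by blast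
  have f0: "f \<noteq> 0" using lf by auto
  then have nz: "g' \<noteq> 0" "h' \<noteq> 0" using fgh by auto
  have "lead_coeff g' * lead_coeff h' = 1" using lf fgh by (simp add: lead_coeff_mult)
  then have lu: "\<not> q dvd lead_coeff g'" "\<not> q dvd lead_coeff h'"
    using q by (metis dvd_mult2 dvd_mult not_prime_unit)+
  have "q dvd coeff f 0" using cf df by auto
  then have "q dvd coeff g' 0 * coeff h' 0" using fgh by (simp add: coeff_mult_0)
  then have or: "q dvd coeff g' 0 \<or> q dvd coeff h' 0" using q by (simp add: prime_dvd_mult_iff)
  have nb: "\<not> (q dvd coeff g' 0 \<and> q dvd coeff h' 0)"
  proof
    assume "q dvd coeff g' 0 \<and> q dvd coeff h' 0"
    then have "q^2 dvd coeff g' 0 * coeff h' 0" by (simp add: power2_eq_square mult_dvd_mono)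
    with c0 fgh show False by (simp add: coeff_mult_0)
  qed
  show "degree g = 0 \<or> degree h = 0"
  proof (cases "q dvd coeff g' 0")
    case True
    with nb have "\<not> q dvd coeff h' 0" by blast
    from eisenstein_aux[OF q _ True this lu(1) nz] cf fgh have "degree h' = 0" by simp
    with dh show ?thesis by simp
  next
    case False
    with or have "q dvd coeff h' 0" by blast
    from eisenstein_aux[OF q _ this False lu(2) nz(2,1)] cf fgh have "degree g' = 0" by (simp add: mult.commute)
    with dg show ?thesis by simp
  qed
qed

lemma alg_simple_ext:
  fixes f :: "rat poly" and x :: complex
  assumes f0: "f \<noteq> 0" and fx: "poly (map_poly of_rat f) x = 0"
  shows "subfield (ring.simple_extension CC \<rat> x) CC"
    "\<exists>n. ring.dimension CC n \<rat> (ring.simple_extension CC \<rat> x)"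
    "(ring.transcendental CC over \<rat>) x \<Longrightarrow> False"
proof -
  interpret C: field CC by (rule field_CC)
  note L = list_of_ratpoly[OF f0]
  have alg: "(C.algebraic over \<rat>) x"
    by (rule C.algebraicI[OF L(1) L(2)]) (simp add: L(4) fx)
  then show "(ring.transcendental CC over \<rat>) x \<Longrightarrow> False" by (simp add: over_def)
  show "subfield (C.simple_extension \<rat> x) CC"
    using C.simple_extension_is_subfield[OF subfield_Rats, of x] alg by simp
  show "\<exists>n. C.dimension n \<rat> (C.simple_extension \<rat> x)"
    using C.dimension_simple_extension[OF subfield_Rats _ alg] by auto
qed

lemma simple_ext_degree:
  fixes f :: "rat poly" and x :: complex
  assumes irr: "irr_rat f" and fx: "poly (map_poly of_rat f) x = 0"
  shows "ring.dimension CC (degree f) \<rat> (ring.simple_extension CC \<rat> x)"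
proof -
  interpret C: field CC by (rule field_CC)
  have f0: "f \<noteq> 0" using irr unfolding irr_rat_def by auto
  note L = list_of_ratpoly[OF f0]
  have alg: "(C.algebraic over \<rat>) x"
    by (rule C.algebraicI[OF L(1) L(2)]) (simp add: L(4) fx)
  have xc: "x \<in> carrier CC" by simp
  note I = C.IrrE[OF subfield_Rats xc alg]
  have Ine: "C.Irr \<rat> x \<noteq> []"
    using I(2) unfolding ring_irreducible_def univ_poly_zero by auto
  have le1: "length (C.Irr \<rat> x) - 1 \<le> degree f"
  proof -
    have "(C.Irr \<rat> x) pdivides\<^bsub>CC\<^esub> (rev (map of_rat (coeffs f)))"
      by (rule C.Irr_minimal[OF subfield_Rats _ alg L(1)]) (simp_all add: L(4) fx)
    from C.pdivides_imp_degree_le[OF subfieldE(1)[OF subfield_Rats] I(1) L(1) L(2) this]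
    show ?thesis using L(3) by simp
  qed
  from ratpoly_of_list[OF I(1) Ine] obtain g :: "rat poly" where
    g0: "g \<noteq> 0 \<and> degree g = length (C.Irr \<rat> x) - 1 \<and>
      (\<forall>y. poly (map_poly of_rat g) y = C.eval (C.Irr \<rat> x) y)" ..
  have g: "g \<noteq> 0" "degree g = length (C.Irr \<rat> x) - 1"
      "\<And>y. poly (map_poly of_rat g) y = C.eval (C.Irr \<rat> x) y" using g0 by auto
  have "degree f \<le> degree g"
    by (rule irr_root_degree_le[OF irr g(1) fx]) (simp add: g(3) I(4))
  with le1 g(2) have "length (C.Irr \<rat> x) - 1 = degree f" by simp
  with C.dimension_simple_extension[OF subfield_Rats _ alg] show ?thesis by simp
qed

lemma dim_mono:
  assumes K: "subfield K CC" and a: "ring.dimension CC a K E'" and b: "ring.dimension CC b K E"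
    and sub: "E' \<subseteq> E"
  shows "a \<le> b"
proof -
  interpret C: field CC by (rule field_CC)
  obtain Vs where Vs: "set Vs \<subseteq> carrier CC" "C.independent K Vs" "length Vs = a" "C.Span K Vs = E'"
    using C.exists_base[OF K a] by blast
  have "set Vs \<subseteq> E'" using C.Span_base_incl[OF K Vs(1)] Vs(4) by simp
  with sub have "set Vs \<subseteq> E" by auto
  from C.independent_length_le_dimension[OF K b Vs(2) this] Vs(3) show ?thesis by simp
qed

definition zeta :: "nat \<Rightarrow> complex" where "zeta N = cis (2 * pi / real N)"

lemma zeta_pow: "zeta N ^ k = cis (2 * pi * real k / real N)"
  unfolding zeta_def by (simp add: DeMoivre mult_ac)

lemma mu_eq: assumes "N > 0" shows "mu N = (\<lambda>k. zeta N ^ k) ` {..<N}"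
proof -
  have "(\<lambda>k. cis (2 * pi * real k / real N)) ` {..<N} = {z. z ^ N = 1}"
    using bij_betw_roots_unity[OF assms] by (simp add: bij_betw_def)
  then show ?thesis unfolding mu_def zeta_pow by simp
qed

lemma zeta_root: assumes "N > 0" shows "zeta N ^ N = 1"
proof -
  have "2 * pi * real N / real N = 2 * pi" using assms by simp
  then show ?thesis unfolding zeta_pow by (simp add: complex_eq_iff)
qed

lemma cyc_subfield: "subfield (cyc N) CC"
proof -
  interpret C: field CC by (rule field_CC)
  show ?thesis unfolding cyc_def by (rule C.generate_field_is_subfield) simp
qed

lemma Rats_cyc: "\<rat> \<subseteq> cyc N"
  by (rule Rats_subset_subfield[OF cyc_subfield])

lemma mu_cyc: "mu N \<subseteq> cyc N"
  unfolding cyc_def by (auto intro: generate_field.incl)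

lemma cyc_eq:
  assumes N: "N > 0"
  shows "cyc N = ring.simple_extension CC \<rat> (zeta N - 1)"
proof -
  interpret C: field CC by (rule field_CC)
  define f :: "rat poly" where "f = [:1,1:]^N - 1"
  have "coeff ([:1,1:]^N :: rat poly) N = 1" using coeff_linear_poly_power[of N N "1::rat" 1] by simp
  then have "coeff f N = 1" using N unfolding f_def by simp
  then have f0: "f \<noteq> 0" by auto
  have fx: "poly (map_poly of_rat f) (zeta N - 1) = 0"
    unfolding f_def by (simp add: hom_distribs zeta_root[OF N])
  note E = alg_simple_ext[OF f0 fx]
  let ?E = "C.simple_extension \<rat> (zeta N - 1)"
  have xE: "zeta N - 1 \<in> ?E"
    by (rule C.simple_extension_mem[OF subfieldE(1)[OF subfield_Rats]]) simp
  have zE: "zeta N \<in> ?E" using subfieldD(5)[OF E(1) xE subfieldD(1)[OF E(1)]] by simp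
  show ?thesis
  proof
    show "cyc N \<subseteq> ?E" unfolding cyc_def
    proof (rule C.generate_field_min_subfield1[OF _ E(1)])
      show "mu N \<subseteq> ?E" using mu_eq[OF N] subfieldD(9)[OF E(1) zE] by auto
    qed simp
    have zc: "zeta N \<in> cyc N" using mu_cyc[of N] zeta_root[OF N] unfolding mu_def by auto
    show "?E \<subseteq> cyc N"
      by (rule C.simple_extension_subring_incl[OF subfieldE(1)[OF cyc_subfield] Rats_cyc])
        (use subfieldD(6)[OF cyc_subfield zc subfieldD(1)[OF cyc_subfield]] in simp)
  qed
qed

lemma cyc_findim: assumes N: "N > 0" shows "\<exists>D. ring.dimension CC D \<rat> (cyc N)"
proof -
  define f :: "rat poly" where "f = [:1,1:]^N - 1"
  have "coeff ([:1,1:]^N :: rat poly) N = 1" using coeff_linear_poly_power[of N N "1::rat" 1] by simp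
  then have "coeff f N = 1" using N unfolding f_def by simp
  then have f0: "f \<noteq> 0" by auto
  have fx: "poly (map_poly of_rat f) (zeta N - 1) = 0"
    unfolding f_def by (simp add: hom_distribs zeta_root[OF N])
  show ?thesis using alg_simple_ext(2)[OF f0 fx] cyc_eq[OF N] by simp
qed

lemma two_dvd_choose_pow2:
  assumes "0 < i" "i < 2^k" shows "2 dvd ((2::nat)^k choose i)"
proof (rule ccontr)
  assume odd: "\<not> 2 dvd ((2::nat)^k choose i)"
  obtain i' where i': "i = Suc i'" using assms(1) by (cases i) auto
  have "i * ((2::nat)^k choose i) = 2^k * ((2^k - 1) choose i')"
    using binomial_absorption[of i' "2^k"] i' by simp
  then have "2^k dvd i * ((2::nat)^k choose i)" by simp
  moreover have "coprime ((2::nat)^k) ((2^k) choose i)"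
    using odd by (simp add: coprime_left_2_iff_odd)
  ultimately have "2^k dvd i" by (simp add: coprime_dvd_mult_left_iff)
  with assms show False by (simp add: nat_dvd_not_less)
qed

lemma cyc_mono: "a dvd b \<Longrightarrow> cyc a \<subseteq> cyc b"
proof -
  interpret C: field CC by (rule field_CC)
  assume "a dvd b"
  then have "mu a \<subseteq> mu b" unfolding mu_def by (auto elim!: dvdE simp: power_mult)
  then show ?thesis unfolding cyc_def by (intro C.mono_generate_field) auto
qed

lemma map_poly_of_rat_of_int:
  "map_poly (of_rat :: rat \<Rightarrow> complex) (map_poly of_int F) = map_poly of_int F"
  by (simp add: map_poly_map_poly o_def)

lemma cyc2_dim: "ring.dimension CC (2^k) \<rat> (cyc (2^(k+1)))"
proof -
  define n :: nat where "n = 2^k"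
  have n1: "n \<ge> 1" unfolding n_def by simp
  define F :: "int poly" where "F = [:1,1:]^n + 1"
  have cF: "coeff F i = (if i = 0 then 2 else if i \<le> n then int (n choose i) else 0)" for i
  proof -
    have c1: "coeff ([:1,1:]^n :: int poly) i = (if i \<le> n then int (n choose i) else 0)"
    proof (cases "i \<le> n")
      case True then show ?thesis using coeff_linear_poly_power[of i n "1::int" 1] by simp
    next
      case False
      have "degree ([:1,1:]^n :: int poly) \<le> n" using degree_power_le[of "[:1,1:]::int poly" n] by simp
      then show ?thesis using False by (simp add: coeff_eq_0)
    qed
    show ?thesis unfolding F_def using c1 by (auto simp: coeff_1)
  qed
  have dF: "degree F = n"
  proof (rule antisym)
    show "degree F \<le> n" by (rule degree_le) (simp add: cF)
    show "n \<le> degree F" by (rule le_degree) (use n1 in \<open>simp add: cF\<close>)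
  qed
  have irr: "irr_rat (map_poly rat_of_int F)"
  proof (rule eisenstein_irr[of 2])
    show "Factorial_Ring.prime (2::int)" by simp
    show "lead_coeff F = 1" using dF n1 by (simp add: cF)
    show "1 \<le> degree F" using dF n1 by simp
    show "\<forall>i<degree F. 2 dvd coeff F i"
    proof (intro allI impI)
      fix i assume "i < degree F"
      then have "i < 2^k" using dF n_def by simp
      then show "2 dvd coeff F i" unfolding cF n_def
        using two_dvd_choose_pow2[of i k] by auto
    qed
    show "\<not> 2^2 dvd coeff F 0" by (simp add: cF)
  qed
  define z where "z = zeta (2^(k+1))"
  have "z ^ n = cis (2 * pi * real (2^k) / real (2^(k+1)))" unfolding z_def n_def zeta_pow ..
  also have "2 * pi * real ((2::nat)^k) / real ((2::nat)^(k+1)) = pi" by simp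
  finally have zn: "z ^ n = -1" by (simp add: complex_eq_iff)
  have root: "poly (map_poly of_rat (map_poly rat_of_int F)) (z - 1) = 0"
    unfolding map_poly_of_rat_of_int F_def by (simp add: hom_distribs zn)
  from simple_ext_degree[OF irr root] dF cyc_eq[of "2^(k+1)"] show ?thesis
    unfolding z_def n_def by simp
qed

lemma zeta_ne_1: assumes "N > 1" shows "zeta N \<noteq> 1"
proof
  assume z: "zeta N = 1"
  have inj: "inj_on (\<lambda>k. cis (2 * pi * real k / real N)) {..<N}"
    using bij_betw_roots_unity[of N] assms by (simp add: bij_betw_def)
  have "(\<lambda>k. cis (2 * pi * real k / real N)) 1 = (\<lambda>k. cis (2 * pi * real k / real N)) 0"
    using z unfolding zeta_def by simp
  from inj_onD[OF inj this] assms show False by simp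
qed

lemma cycp_dim_ge:
  assumes p: "Factorial_Ring.prime (p::nat)" and m: "m \<ge> 1"
  shows "\<exists>D. ring.dimension CC D \<rat> (cyc (p^m)) \<and> p - 1 \<le> D"
proof -
  have p2: "p \<ge> 2" using p by (simp add: prime_ge_2_nat)
  define G :: "int poly" where "G = (\<Sum>i<p. monom (int (p choose (i+1))) i)"
  have cG: "coeff G j = (if j < p then int (p choose (j+1)) else 0)" for j
    unfolding G_def by (simp add: coeff_sum coeff_monom)
  have dG: "degree G = p - 1"
  proof (rule antisym)
    show "degree G \<le> p - 1" by (rule degree_le) (auto simp: cG)
    show "p - 1 \<le> degree G" by (rule le_degree) (use p2 in \<open>simp add: cG\<close>)
  qed
  have irr: "irr_rat (map_poly rat_of_int G)"
  proof (rule eisenstein_irr[of "int p"])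
    show "Factorial_Ring.prime (int p)" using p by simp
    show "lead_coeff G = 1" using dG p2 by (simp add: cG)
    show "1 \<le> degree G" using dG p2 by simp
    show "\<forall>i<degree G. int p dvd coeff G i"
    proof (intro allI impI)
      fix i assume "i < degree G"
      then have "i + 1 < p" using dG by simp
      then have "p dvd (p choose (i+1))" using p p2 by (intro dvd_choose_prime) auto
      then show "int p dvd coeff G i" using \<open>i + 1 < p\<close> by (simp add: cG)
    qed
    show "\<not> (int p)^2 dvd coeff G 0"
    proof
      assume "(int p)^2 dvd coeff G 0"
      then have "(int p)^2 dvd int p" using p2 by (simp add: cG)
      then have "(int p)^2 \<le> int p" using p2 by (intro zdvd_imp_le) auto
      moreover have "int p * 2 \<le> int p * int p" using p2 by (intro mult_left_mono) auto
      ultimately show False using p2 by (simp add: power2_eq_square)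
    qed
  qed
  define y where "y = zeta p - 1"
  have y0: "y \<noteq> 0" unfolding y_def using zeta_ne_1[of p] p2 by simp
  have "poly (map_poly of_int G) y * y = (y + 1)^p - 1"
  proof -
    have "poly (map_poly of_int G) y * y = (\<Sum>i<p. of_nat (p choose (i+1)) * y^(i+1))"
      unfolding G_def by (simp add: hom_distribs poly_sum poly_monom sum_distrib_right mult_ac)
    also have "\<dots> = (\<Sum>j<Suc p. of_nat (p choose j) * y^j) - 1"
      by (subst sum.lessThan_Suc_shift) simp
    also have "(\<Sum>j<Suc p. of_nat (p choose j) * y^j) = (y + 1)^p"
      by (simp add: binomial_ring lessThan_Suc_atMost mult_ac)
    finally show ?thesis .
  qed
  also have "(y + 1)^p - 1 = 0" unfolding y_def using zeta_root[of p] p2 by simp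
  finally have root: "poly (map_poly of_rat (map_poly rat_of_int G)) y = 0"
    unfolding map_poly_of_rat_of_int using y0 by simp
  have D1: "ring.dimension CC (p - 1) \<rat> (cyc p)"
    using simple_ext_degree[OF irr root] dG cyc_eq[of p] p2 unfolding y_def by simp
  obtain D where D: "ring.dimension CC D \<rat> (cyc (p^m))" using cyc_findim[of "p^m"] p2 by auto
  have "cyc p \<subseteq> cyc (p^m)" using m by (intro cyc_mono) (simp add: dvd_power)
  from dim_mono[OF subfield_Rats D1 D this] D show ?thesis by blast
qed

definition alpha :: "nat \<Rightarrow> complex" where "alpha d = complex_of_real (root d 2)"

lemma alpha_dim: assumes d: "d \<ge> 1"
  shows "ring.dimension CC d \<rat> (ring.simple_extension CC \<rat> (alpha d))"
proof -
  define H :: "int poly" where "H = monom 1 d - 2"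
  have cH: "coeff H j = (if j = d then 1 else if j = 0 then -2 else 0)" for j
    unfolding H_def using d by (auto simp: coeff_monom coeff_diff numeral_poly coeff_pCons')
  have dH: "degree H = d"
  proof (rule antisym)
    show "degree H \<le> d" by (rule degree_le) (auto simp: cH)
    show "d \<le> degree H" by (rule le_degree) (simp add: cH)
  qed
  have irr: "irr_rat (map_poly rat_of_int H)"
  proof (rule eisenstein_irr[of 2])
    show "Factorial_Ring.prime (2::int)" by simp
    show "lead_coeff H = 1" using dH by (simp add: cH)
    show "1 \<le> degree H" using dH d by simp
    show "\<forall>i<degree H. 2 dvd coeff H i" using dH by (auto simp: cH)
    show "\<not> 2^2 dvd coeff H 0" using d by (simp add: cH)
  qed
  have r: "root d 2 ^ d = (2::real)" using d by (intro real_root_pow_pos2) auto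
  have "(alpha d)^d = 2" unfolding alpha_def of_real_power[symmetric] r by simp
  then have root: "poly (map_poly of_rat (map_poly rat_of_int H)) (alpha d) = 0"
    unfolding map_poly_of_rat_of_int H_def by (simp add: hom_distribs poly_monom)
  from simple_ext_degree[OF irr root] dH show ?thesis by simp
qed

lemma subfield_subalgebra:
  assumes F: "subfield F CC" and K: "K \<subseteq> F"
  shows "subalgebra K F CC"
proof -
  interpret C: field CC by (rule field_CC)
  show ?thesis
  proof (rule subalgebra.intro)
    show "subgroup F (add_monoid CC)" using subring.axioms(1)[OF subfieldE(1)[OF F]] .
    show "subalgebra_axioms K F CC"
      by (unfold_locales) (use K subfieldD(4)[OF F] in auto)
  qed
qed

lemma Span_mono_K:
  assumes "K \<subseteq> F" "set Us \<subseteq> carrier CC" and KF: "subfield K CC" "subfield F CC"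
  shows "ring.Span CC K Us \<subseteq> ring.Span CC F Us"
proof -
  interpret C: field CC by (rule field_CC)
  show ?thesis unfolding C.Span_eq_combine_set[OF KF(1) assms(2)] C.Span_eq_combine_set[OF KF(2) assms(2)]
    using assms(1) by blast
qed

lemma tower:
  assumes K: "subfield K CC" and F: "subfield F CC" and E: "subfield E CC"
    and KF: "K \<subseteq> F" and FE: "F \<subseteq> E" and n: "ring.dimension CC n K E"
  obtains a b where "ring.dimension CC a K F" "ring.dimension CC b F E" "n = a * b"
proof -
  interpret C: field CC by (rule field_CC)
  have fdE: "C.finite_dimension K E" using C.finite_dimensionI[OF n] .
  have "C.finite_dimension K F"
    by (rule C.subalbegra_incl_imp_finite_dimension[OF K fdE subfield_subalgebra[OF F KF] FE])
  then obtain a where a: "C.dimension a K F" by blast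
  obtain Vs where Vs: "set Vs \<subseteq> carrier CC" "C.independent K Vs" "length Vs = n" "C.Span K Vs = E"
    using C.exists_base[OF K n] by blast
  have "C.Span F Vs \<subseteq> E"
    by (rule C.subalgebra_Span_incl[OF F subfield_subalgebra[OF E FE]])
      (use C.Span_base_incl[OF K Vs(1)] Vs(4) in auto)
  moreover have "E \<subseteq> C.Span F Vs" using Span_mono_K[OF KF Vs(1) K F] Vs(4) by simp
  ultimately have "C.Span F Vs = E" by auto
  then have "C.finite_dimension F E" using C.Span_finite_dimension[OF F Vs(1)] by simp
  then obtain b where b: "C.dimension b F E" by blast
  have "C.dimension (a * b) K E" by (rule C.telescopic_base[OF K F a b])
  with C.dimension_is_inj[OF K n] have "n = a * b" by simp
  with a b show ?thesis by (rule that)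
qed

lemma dim_eq:
  assumes K: "subfield K CC" and a: "ring.dimension CC n K E'" and b: "ring.dimension CC n K E"
    and sub: "E' \<subseteq> E"
  shows "E' = E"
proof -
  interpret C: field CC by (rule field_CC)
  obtain Vs where Vs: "set Vs \<subseteq> carrier CC" "C.independent K Vs" "length Vs = n" "C.Span K Vs = E'"
    using C.exists_base[OF K a] by blast
  have "set Vs \<subseteq> E'" using C.Span_base_incl[OF K Vs(1)] Vs(4) by simp
  with sub have "set Vs \<subseteq> E" by auto
  from C.independent_length_eq_dimension[OF K b Vs(2) this] Vs(3,4) show ?thesis by simp
qed

lemma dim1_eq:
  assumes F: "subfield F CC" and sub: "F \<subseteq> E" and d: "ring.dimension CC 1 F E"
  shows "F = E"
proof -
  interpret C: field CC by (rule field_CC)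
  show ?thesis by (rule dim_eq[OF F C.dimension_one[OF F] d sub])
qed




lemma cyc_pow_mono: "a \<le> b \<Longrightarrow> cyc (p^a) \<subseteq> cyc (p^b)"
  by (intro cyc_mono le_imp_power_dvd)

lemma cyc_inf_memE:
  assumes "x \<in> cyc_inf p" obtains a where "x \<in> cyc (p^a)"
  using assms unfolding cyc_inf_def by blast

lemma cyc_inf_memI: "x \<in> cyc (p^a) \<Longrightarrow> x \<in> cyc_inf p"
  unfolding cyc_inf_def by blast

lemma cyc_inf_subfield: "subfield (cyc_inf p) CC"
  unfolding subfield_CC_iff
proof (intro conjI ballI impI)
  show "1 \<in> cyc_inf p" by (rule cyc_inf_memI[of _ _ 0]) (rule subfieldD(1)[OF cyc_subfield])
next
  fix x assume "x \<in> cyc_inf p"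
  then obtain a where xa: "x \<in> cyc (p^a)" by (rule cyc_inf_memE)
  show "-x \<in> cyc_inf p" by (rule cyc_inf_memI[of _ _ a]) (rule subfieldD(3)[OF cyc_subfield xa])
  assume "x \<noteq> 0"
  show "inverse x \<in> cyc_inf p" by (rule cyc_inf_memI[of _ _ a]) (rule subfieldD(7)[OF cyc_subfield xa])
next
  fix x y assume "x \<in> cyc_inf p" "y \<in> cyc_inf p"
  then obtain a b where xa: "x \<in> cyc (p^a)" and yb: "y \<in> cyc (p^b)" by (auto elim!: cyc_inf_memE)
  have x': "x \<in> cyc (p^(max a b))" using xa cyc_pow_mono[of a "max a b" p] by auto
  have y': "y \<in> cyc (p^(max a b))" using yb cyc_pow_mono[of b "max a b" p] by auto
  show "x * y \<in> cyc_inf p" by (rule cyc_inf_memI[of _ _ "max a b"]) (rule subfieldD(4)[OF cyc_subfield x' y'])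
  show "x + y \<in> cyc_inf p" by (rule cyc_inf_memI[of _ _ "max a b"]) (rule subfieldD(5)[OF cyc_subfield x' y'])
qed

lemma findim_in_cyc:
  assumes F: "ring.dimension CC a \<rat> F" and sub: "F \<subseteq> cyc_inf p"
  obtains M where "F \<subseteq> cyc (p^M)"
proof -
  interpret C: field CC by (rule field_CC)
  obtain Vs where Vs: "set Vs \<subseteq> carrier CC" "C.independent \<rat> Vs" "length Vs = a" "C.Span \<rat> Vs = F"
    using C.exists_base[OF subfield_Rats F] by blast
  have VF: "set Vs \<subseteq> F" using C.Span_base_incl[OF subfield_Rats Vs(1)] Vs(4) by simp
  have "\<forall>v\<in>set Vs. \<exists>m. v \<in> cyc (p^m)"
  proof
    fix v assume "v \<in> set Vs"
    with VF sub have "v \<in> cyc_inf p" by blast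
    then obtain m where "v \<in> cyc (p^m)" by (rule cyc_inf_memE)
    then show "\<exists>m. v \<in> cyc (p^m)" ..
  qed
  from bchoice[OF this] obtain mf where mf: "\<forall>v\<in>set Vs. v \<in> cyc (p^(mf v))" ..
  define M where "M = Max (insert 0 (mf ` set Vs))"
  have "set Vs \<subseteq> cyc (p^M)"
  proof
    fix v assume v: "v \<in> set Vs"
    have "mf v \<le> M" unfolding M_def using v by simp
    then have "cyc (p^(mf v)) \<subseteq> cyc (p^M)" by (rule cyc_pow_mono)
    with mf v show "v \<in> cyc (p^M)" by blast
  qed
  then have "C.Span \<rat> Vs \<subseteq> cyc (p^M)"
    by (intro C.subalgebra_Span_incl[OF subfield_Rats subfield_subalgebra[OF cyc_subfield Rats_cyc]])
  with Vs(4) have "F \<subseteq> cyc (p^M)" by simp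
  then show ?thesis by (rule that)
qed

lemma Fp_subfield:
  assumes Z: "subfield Z CC" shows "subfield (Fp Z p) CC"
proof -
  note A = cyc_inf_subfield[of p]
  show ?thesis unfolding subfield_CC_iff
  proof (intro conjI ballI impI)
    show "1 \<in> Fp Z p" unfolding Fp_def using subfieldD(1)[OF Z] subfieldD(1)[OF A] by simp
  next
    fix x assume x: "x \<in> Fp Z p"
    then have x1: "x \<in> Z" and x2: "x \<in> cyc_inf p" unfolding Fp_def by auto
    show "-x \<in> Fp Z p" unfolding Fp_def using subfieldD(3)[OF Z x1] subfieldD(3)[OF A x2] by simp
    show "inverse x \<in> Fp Z p" unfolding Fp_def using subfieldD(7)[OF Z x1] subfieldD(7)[OF A x2] by simp
    fix y assume y: "y \<in> Fp Z p"
    then have y1: "y \<in> Z" and y2: "y \<in> cyc_inf p" unfolding Fp_def by auto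
    show "x * y \<in> Fp Z p" unfolding Fp_def using subfieldD(4)[OF Z x1 y1] subfieldD(4)[OF A x2 y2] by simp
    show "x + y \<in> Fp Z p" unfolding Fp_def using subfieldD(5)[OF Z x1 y1] subfieldD(5)[OF A x2 y2] by simp
  qed
qed

lemma Rats_Fp:
  assumes Z: "subfield Z CC" shows "\<rat> \<subseteq> Fp Z p"
proof -
  have "\<rat> \<subseteq> cyc (p^0)" by (rule Rats_cyc)
  then have "\<rat> \<subseteq> cyc_inf p" using cyc_inf_memI[of _ p 0] by blast
  with Rats_subset_subfield[OF Z] show ?thesis unfolding Fp_def by blast
qed

lemma m_idx_props:
  assumes F: "ring.dimension CC a \<rat> (Fp Z p)" and p: "p > 0"
  shows "m_idx Z p \<ge> 1" "p ^ m_idx Z p \<noteq> 2" "Fp Z p \<subseteq> cyc (p ^ m_idx Z p)"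
    and "m \<ge> 1 \<Longrightarrow> Fp Z p \<subseteq> cyc (p ^ m) \<Longrightarrow> p ^ m \<noteq> 2 \<Longrightarrow> m_idx Z p \<le> m"
proof -
  define S where "S = {m. m \<ge> 1 \<and> Fp Z p \<subseteq> cyc (p ^ m) \<and> p ^ m \<noteq> 2}"
  have mI: "m_idx Z p = Inf S" unfolding m_idx_def S_def ..
  have sub: "Fp Z p \<subseteq> cyc_inf p" unfolding Fp_def by blast
  obtain M where M: "Fp Z p \<subseteq> cyc (p^M)" by (rule findim_in_cyc[OF F sub])
  have p2: "p ^ (M + 2) \<noteq> 2"
  proof (cases "p = 1")
    case False
    then have "p \<ge> 2" using p by simp
    then have "p ^ (M+2) \<ge> 2 ^ (M+2)" by (rule power_mono) simp
    moreover have "(2::nat) ^ 2 \<le> 2 ^ (M+2)" by (rule power_increasing) simp_all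
    ultimately have "(2::nat) ^ 2 \<le> p ^ (M+2)" by (rule order_trans[rotated])
    then show ?thesis by auto
  qed simp
  have "cyc (p^M) \<subseteq> cyc (p^(M+2))" by (rule cyc_pow_mono) simp
  with M p2 have "M + 2 \<in> S" unfolding S_def by auto
  then have Sne: "S \<noteq> {}" by blast
  have mS: "m_idx Z p \<in> S" unfolding mI by (rule Inf_nat_def1[OF Sne])
  then show "m_idx Z p \<ge> 1" "p ^ m_idx Z p \<noteq> 2" "Fp Z p \<subseteq> cyc (p ^ m_idx Z p)"
    unfolding S_def by simp_all
  assume "m \<ge> 1" "Fp Z p \<subseteq> cyc (p ^ m)" "p ^ m \<noteq> 2"
  then have "m \<in> S" unfolding S_def by simp
  then show "m_idx Z p \<le> m" unfolding mI Inf_nat_def by (rule Least_le)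
qed

lemma Fp_analysis:
  assumes NF: "number_field Z" and deg: "has_degree Z N" and p: "p > 0"
  obtains a D where "ring.dimension CC a \<rat> (Fp Z p)" "a dvd N"
      "ring.dimension CC D \<rat> (cyc (p ^ m_idx Z p))" "D = a * t_idx Z p"
      "ring.dimension CC (t_idx Z p) (Fp Z p) (cyc (p ^ m_idx Z p))"
proof -
  interpret C: field CC by (rule field_CC)
  have Z: "subfield Z CC" using NF unfolding number_field_def by blast
  have dZ: "C.dimension N \<rat> Z" using deg unfolding has_degree_def .
  have F: "subfield (Fp Z p) CC" by (rule Fp_subfield[OF Z])
  have QF: "\<rat> \<subseteq> Fp Z p" by (rule Rats_Fp[OF Z])
  have FZ: "Fp Z p \<subseteq> Z" unfolding Fp_def by blast
  obtain a b where a: "C.dimension a \<rat> (Fp Z p)" and b: "C.dimension b (Fp Z p) Z" and ab: "N = a * b"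
    by (rule tower[OF subfield_Rats F Z QF FZ dZ])
  note mp = m_idx_props[OF a p]
  have "p ^ m_idx Z p > 0" using p by simp
  from cyc_findim[OF this] obtain D where D: "C.dimension D \<rat> (cyc (p ^ m_idx Z p))" ..
  obtain a' t where a': "C.dimension a' \<rat> (Fp Z p)" and t: "C.dimension t (Fp Z p) (cyc (p ^ m_idx Z p))"
      and Dat: "D = a' * t"
    by (rule tower[OF subfield_Rats F cyc_subfield QF mp(3) D])
  have aa: "a' = a" by (rule C.dimension_is_inj[OF subfield_Rats a' a])
  have tt: "t_idx Z p = t" unfolding t_idx_def rel_degree_def
  proof (rule the_equality)
    show "C.dimension t (Fp Z p) (cyc (p ^ m_idx Z p))" by (rule t)
    fix n assume "C.dimension n (Fp Z p) (cyc (p ^ m_idx Z p))"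
    from C.dimension_is_inj[OF F this t] show "n = t" .
  qed
  have "a dvd N" unfolding ab by simp
  moreover have "D = a * t_idx Z p" unfolding Dat aa tt ..
  moreover have "C.dimension (t_idx Z p) (Fp Z p) (cyc (p ^ m_idx Z p))" unfolding tt by (rule t)
  ultimately show ?thesis using that a D by blast
qed

abbreviation v2 :: "nat \<Rightarrow> nat" where "v2 x \<equiv> multiplicity (2::nat) x"

lemma prime_elem_2: "prime_elem (2::nat)" by simp

lemma v2_mult: "x \<noteq> 0 \<Longrightarrow> y \<noteq> 0 \<Longrightarrow> v2 (x * y) = v2 x + v2 y"
  by (rule prime_elem_multiplicity_mult_distrib[OF prime_elem_2])

lemma v2_fact_double: "v2 (fact (2*q)) = q + v2 (fact q)"
proof (induct q)
  case 0 then show ?case by simp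
next
  case (Suc q)
  have e1: "fact (2 * Suc q) = (2 * Suc q) * ((2*q+1) * fact (2*q) :: nat)"
    by (simp add: fact_Suc algebra_simps)
  have o: "v2 (2*q+1) = 0" by (rule not_dvd_imp_multiplicity_0) simp
  have t: "v2 (2 * Suc q) = Suc (v2 (Suc q))" by (rule multiplicity_times_same) simp_all
  have m1: "v2 ((2 * Suc q) * ((2*q+1) * fact (2*q))) = v2 (2 * Suc q) + v2 ((2*q+1) * fact (2*q))"
    by (rule v2_mult) simp_all
  have m2: "v2 ((2*q+1) * fact (2*q)) = v2 (2*q+1) + v2 (fact (2*q))"
    by (rule v2_mult) simp_all
  have "v2 (fact (2 * Suc q)) = v2 (2 * Suc q) + (v2 (2*q+1) + v2 (fact (2*q)))"
    unfolding e1 m1 m2 ..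
  also have "\<dots> = Suc (v2 (Suc q)) + q + v2 (fact q)" using o t Suc by simp
  also have "v2 (fact (Suc q)) = v2 (Suc q) + v2 (fact q)"
  proof -
    have "fact (Suc q) = Suc q * (fact q :: nat)" by simp
    moreover have "v2 (Suc q * fact q) = v2 (Suc q) + v2 (fact q)" by (rule v2_mult) simp_all
    ultimately show ?thesis by simp
  qed
  ultimately show ?case by simp
qed

lemma v2_fact_pow: "j * q + v2 (fact q) \<le> v2 (fact (2^j * q))"
proof (induct j)
  case 0 then show ?case by simp
next
  case (Suc j)
  have A: "v2 (fact (2^Suc j * q)) = 2^j * q + v2 (fact (2^j * q))"
    using v2_fact_double[of "2^j * q"] by (simp add: mult_ac)
  have B: "q \<le> 2^j * q" by simp
  have C: "Suc j * q = q + j * q" by simp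
  show ?case unfolding A C using B Suc by linarith
qed

lemma v2_fact_mono: "a \<le> b \<Longrightarrow> v2 (fact a) \<le> v2 (fact b)"
  by (rule dvd_imp_multiplicity_le[OF fact_dvd]) simp_all

lemma val_bound:
  fixes s n e j m :: nat
  assumes s: "s \<ge> 1" and n: "n \<ge> 1" and m: "m = e + j + 1" and e: "e \<le> n"
  shows "(s - s div 2^j) + m * (s div 2^j) + v2 (fact (s div 2^j)) \<le> (n+1)*s + v2 (fact s)"
    and "(s - s div 2^j) + m * (s div 2^j) + v2 (fact (s div 2^j)) = (n+1)*s + v2 (fact s) \<Longrightarrow> j = 0 \<and> e = n"
proof -
  define q where "q = s div 2^j"
  have "(s - q) + m * q + v2 (fact q) \<le> (n+1)*s + v2 (fact s) \<and>
        ((s - q) + m * q + v2 (fact q) = (n+1)*s + v2 (fact s) \<longrightarrow> j = 0 \<and> e = n)"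
  proof (cases "j = 0")
    case True
    then have q: "q = s" unfolding q_def by simp
    have "(e+1) * s \<le> (n+1) * s" using e by simp
    moreover have "(e+1) * s = (n+1) * s \<Longrightarrow> e = n" using s by simp
    ultimately show ?thesis using q m True by (simp add: algebra_simps)
  next
    case False
    have qs: "q * 2^j \<le> s" unfolding q_def by (rule div_times_less_eq_dividend)
    have "2 ^ 1 \<le> (2::nat) ^ j" using False by (intro power_increasing) simp_all
    then have "q * 2 \<le> q * 2^j" by simp
    with qs s have qs2: "q < s" by linarith
    have "v2 (fact (2^j * q)) \<le> v2 (fact s)" using qs by (intro v2_fact_mono) (simp add: mult.commute)
    with v2_fact_pow[of j q] have f: "j * q + v2 (fact q) \<le> v2 (fact s)" by simp
    have A: "e * q \<le> n * q" using e by (rule mult_right_mono) simp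
    have B: "n * q < n * s" using qs2 n by (intro mult_strict_left_mono) simp_all
    have C: "(s - q) + m * q = s + e * q + j * q" using qs2 m by (simp add: algebra_simps)
    have D: "(n+1)*s = s + n * s" by simp
    have "(s - q) + m * q + v2 (fact q) < (n+1)*s + v2 (fact s)" unfolding C D using f A B by linarith
    then show ?thesis by simp
  qed
  then show "(s - s div 2^j) + m * (s div 2^j) + v2 (fact (s div 2^j)) \<le> (n+1)*s + v2 (fact s)"
    and "(s - s div 2^j) + m * (s div 2^j) + v2 (fact (s div 2^j)) = (n+1)*s + v2 (fact s) \<Longrightarrow> j = 0 \<and> e = n"
    unfolding q_def by simp_all
qed

lemma schur_factor_pos: "Factorial_Ring.prime p \<Longrightarrow> schur_factor s F p \<noteq> 0"
  unfolding schur_factor_def ppart_def by simp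

lemma v2_schur:
  assumes fin: "finite {p. Factorial_Ring.prime p \<and> schur_factor s F p \<noteq> 1}"
  shows "v2 (schur_bound s F) = (s - s div t_idx F 2) + m_idx F 2 * (s div t_idx F 2) + v2 (fact (s div t_idx F 2))"
proof -
  define S where "S = {p. Factorial_Ring.prime p \<and> schur_factor s F p \<noteq> 1}"
  define q where "q = s div t_idx F 2"
  have sf2: "schur_factor s F 2 = 2 ^ (m_idx F 2 * q + v2 (fact q))"
    unfolding schur_factor_def ppart_def q_def by (simp add: power_add)
  have v2sf: "v2 (schur_factor s F p) = (if p = 2 then m_idx F 2 * q + v2 (fact q) else 0)"
    if "p \<in> S" for p
  proof (cases "p = 2")
    case True then show ?thesis using sf2 by simp
  next
    case False
    have pp: "Factorial_Ring.prime p" using that unfolding S_def by blast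
    have "schur_factor s F p = p ^ (m_idx F p * (s div t_idx F p) + multiplicity p (fact (s div t_idx F p)))"
      unfolding schur_factor_def ppart_def by (simp add: power_add)
    then show ?thesis using False pp by (simp add: multiplicity_distinct_prime_power)
  qed
  have nz: "0 \<notin> schur_factor s F ` S"
  proof
    assume "0 \<in> schur_factor s F ` S"
    then obtain p where p: "p \<in> S" "0 = schur_factor s F p" by blast
    then have "Factorial_Ring.prime p" unfolding S_def by blast
    from schur_factor_pos[OF this, of s F] p(2) show False by simp
  qed
  have "v2 (\<Prod>p\<in>S. schur_factor s F p) = (\<Sum>p\<in>S. v2 (schur_factor s F p))"
    by (rule prime_elem_multiplicity_prod_distrib[OF prime_elem_2 nz fin[folded S_def]])
  also have "\<dots> = (\<Sum>p\<in>S. (if p = 2 then m_idx F 2 * q + v2 (fact q) else 0))"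
    by (rule sum.cong) (simp_all add: v2sf)
  also have "\<dots> = (if 2 \<in> S then m_idx F 2 * q + v2 (fact q) else 0)"
    using fin[folded S_def] by (simp add: sum.delta)
  also have "\<dots> = m_idx F 2 * q + v2 (fact q)"
  proof (cases "2 \<in> S")
    case False
    then have "schur_factor s F 2 = 1" unfolding S_def by simp
    then have "m_idx F 2 * q + v2 (fact q) = 0" using sf2 by simp
    then show ?thesis by simp
  qed simp
  finally have P: "v2 (\<Prod>p\<in>S. schur_factor s F p) = m_idx F 2 * q + v2 (fact q)" .
  have P0: "(\<Prod>p\<in>S. schur_factor s F p) \<noteq> 0"
  proof
    assume "(\<Prod>p\<in>S. schur_factor s F p) = 0"
    then have "\<exists>p\<in>S. schur_factor s F p = 0" using prod_zero_iff[OF fin[folded S_def]] by blast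
    then obtain p where "p \<in> S" "schur_factor s F p = 0" by blast
    then show False using nz by (metis image_eqI)
  qed
  have "v2 (schur_bound s F) = v2 (2 ^ (s - q)) + v2 (\<Prod>p\<in>S. schur_factor s F p)"
    unfolding schur_bound_def S_def[symmetric] q_def[symmetric] using P0 by (simp add: v2_mult)
  also have "v2 (2 ^ (s - q)) = s - q" by simp
  finally have "v2 (schur_bound s F) = (s - q) + (m_idx F 2 * q + v2 (fact q))" using P by simp
  then show ?thesis unfolding q_def by (simp only: add.assoc)
qed

lemma schur_finite:
  assumes NF: "number_field Z" and deg: "has_degree Z (2*d)" and d: "d \<ge> 1" and s: "s \<ge> 1"
  shows "finite {p. Factorial_Ring.prime p \<and> schur_factor s Z p \<noteq> 1}"
proof (rule finite_subset[of _ "{..2*d*s+1}"])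
  show "{p. Factorial_Ring.prime p \<and> schur_factor s Z p \<noteq> 1} \<subseteq> {..2*d*s+1}"
  proof (rule subsetI, rule ccontr)
    fix p assume "p \<in> {p. Factorial_Ring.prime p \<and> schur_factor s Z p \<noteq> 1}" and np: "p \<notin> {..2*d*s+1}"
    then have pp: "Factorial_Ring.prime p" and sf: "schur_factor s Z p \<noteq> 1" by auto
    have big: "p > 2*d*s+1" using np by simp
    have p0: "p > 0" using pp by (simp add: prime_gt_0_nat)
    obtain a D where a: "ring.dimension CC a \<rat> (Fp Z p)" and ad: "a dvd 2*d"
        and D: "ring.dimension CC D \<rat> (cyc (p ^ m_idx Z p))" and Dat: "D = a * t_idx Z p"
      by (rule Fp_analysis[OF NF deg p0])
    have m1: "m_idx Z p \<ge> 1" by (rule m_idx_props(1)[OF a p0])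
    obtain D' where D': "ring.dimension CC D' \<rat> (cyc (p ^ m_idx Z p))" and pD: "p - 1 \<le> D'"
      using cycp_dim_ge[OF pp m1] by blast
    have "D' = D" using ring.dimension_is_inj[OF field.axioms(1)[OF field_CC, THEN domain.axioms(1), THEN cring.axioms(1)] subfield_Rats D' D] .
    have a2: "a \<le> 2*d" using ad d by (simp add: dvd_imp_le)
    have "t_idx Z p > s"
    proof (rule ccontr)
      assume "\<not> t_idx Z p > s"
      then have "a * t_idx Z p \<le> 2*d*s" using a2 by (simp add: mult_le_mono)
      with Dat pD \<open>D' = D\<close> big show False by linarith
    qed
    then have "s div t_idx Z p = 0" by simp
    then have "schur_factor s Z p = 1" unfolding schur_factor_def ppart_def by simp
    with sf show False by simp
  qed
qed simp

lemma two_analysis: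
  assumes NF: "number_field Z" and deg: "has_degree Z (2*d)" and d: "d \<ge> 1"
  obtains e j where "ring.dimension CC (2^e) \<rat> (Fp Z 2)" "e \<le> multiplicity (2::nat) (2*d)"
    "m_idx Z 2 = e + j + 1" "t_idx Z 2 = 2^j"
    "ring.dimension CC (2^j) (Fp Z 2) (cyc (2 ^ m_idx Z 2))" "Fp Z 2 \<subseteq> cyc (2 ^ m_idx Z 2)"
    "m_idx Z 2 \<ge> 2"
proof -
  interpret C: field CC by (rule field_CC)
  have p0: "(2::nat) > 0" by simp
  obtain a D where a: "C.dimension a \<rat> (Fp Z 2)" and ad: "a dvd 2*d"
      and D: "C.dimension D \<rat> (cyc (2 ^ m_idx Z 2))" and Dat: "D = a * t_idx Z 2"
      and t: "C.dimension (t_idx Z 2) (Fp Z 2) (cyc (2 ^ m_idx Z 2))"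
    by (rule Fp_analysis[OF NF deg p0])
  note mp = m_idx_props[OF a p0]
  let ?m = "m_idx Z 2"
  have m2: "?m \<ge> 2"
  proof (rule ccontr)
    assume "\<not> ?m \<ge> 2"
    with mp(1) have "?m = 1" by simp
    with mp(2) show False by simp
  qed
  have "C.dimension (2^(?m - 1)) \<rat> (cyc (2 ^ (?m - 1 + 1)))" by (rule cyc2_dim)
  then have D2: "C.dimension (2^(?m - 1)) \<rat> (cyc (2 ^ ?m))" using m2 by simp
  have "D = 2^(?m - 1)" by (rule C.dimension_is_inj[OF subfield_Rats D D2])
  with Dat have at: "a * t_idx Z 2 = 2^(?m - 1)" by simp
  then have "a dvd 2^(?m - 1)" by (metis dvd_triv_left)
  then obtain e where e: "e \<le> ?m - 1" "a = 2^e" by (auto simp: divides_primepow_nat)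
  have "t_idx Z 2 * 2^e = 2^(?m - 1 - e) * 2^e" using at e by (simp add: power_add[symmetric] mult.commute)
  then have tj: "t_idx Z 2 = 2^(?m - 1 - e)" by simp
  have en: "e \<le> multiplicity (2::nat) (2*d)" using ad e(2) d by (intro multiplicity_geI) simp_all
  show ?thesis
  proof (rule that[of e "?m - 1 - e"])
    show "C.dimension (2^e) \<rat> (Fp Z 2)" using a e by simp
    show "e \<le> multiplicity 2 (2*d)" by (rule en)
    show "?m = e + (?m - 1 - e) + 1" using e m2 by simp
    show "t_idx Z 2 = 2^(?m - 1 - e)" by (rule tj)
    show "C.dimension (2^(?m - 1 - e)) (Fp Z 2) (cyc (2 ^ ?m))" using t tj by simp
    show "Fp Z 2 \<subseteq> cyc (2 ^ ?m)" by (rule mp(3))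
    show "?m \<ge> 2" by (rule m2)
  qed
qed

lemma mult2_ge1: "d \<ge> 1 \<Longrightarrow> multiplicity (2::nat) (2*d) \<ge> 1"
  by (intro multiplicity_geI) simp_all

lemma val_general:
  assumes NF: "number_field Z" and deg: "has_degree Z (2*d)" and d: "d \<ge> 1" and s: "s \<ge> 1"
  shows "v2 (schur_bound s Z) \<le> (multiplicity (2::nat) (2*d) + 1) * s + v2 (fact s)"
    and "v2 (schur_bound s Z) = (multiplicity (2::nat) (2*d) + 1) * s + v2 (fact s) \<Longrightarrow>
         Fp Z 2 = cyc (2 ^ (multiplicity (2::nat) (2*d) + 1))"
proof -
  define n where "n = multiplicity (2::nat) (2*d)"
  have n1: "n \<ge> 1" unfolding n_def by (rule mult2_ge1[OF d])
  obtain e j where e: "ring.dimension CC (2^e) \<rat> (Fp Z 2)" and en: "e \<le> n"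
    and m: "m_idx Z 2 = e + j + 1" and t: "t_idx Z 2 = 2^j"
    and dt: "ring.dimension CC (2^j) (Fp Z 2) (cyc (2 ^ m_idx Z 2))"
    and sub: "Fp Z 2 \<subseteq> cyc (2 ^ m_idx Z 2)"
    using two_analysis[OF NF deg d] unfolding n_def by blast
  have V: "v2 (schur_bound s Z) = (s - s div 2^j) + m_idx Z 2 * (s div 2^j) + v2 (fact (s div 2^j))"
    using v2_schur[OF schur_finite[OF NF deg d s]] t by simp
  show "v2 (schur_bound s Z) \<le> (multiplicity (2::nat) (2*d) + 1) * s + v2 (fact s)"
    unfolding V n_def[symmetric] by (rule val_bound(1)[OF s n1 m en])
  assume eq: "v2 (schur_bound s Z) = (multiplicity (2::nat) (2*d) + 1) * s + v2 (fact s)"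
  have "j = 0 \<and> e = n" using eq unfolding V n_def[symmetric] by (rule val_bound(2)[OF s n1 m en])
  then have j0: "j = 0" and en': "e = n" by auto
  have Z: "subfield Z CC" using NF unfolding number_field_def by blast
  have "Fp Z 2 = cyc (2 ^ m_idx Z 2)"
    using dim1_eq[OF Fp_subfield[OF Z] sub] dt j0 by simp
  then show "Fp Z 2 = cyc (2 ^ (multiplicity (2::nat) (2*d) + 1))"
    using m j0 en' unfolding n_def by simp
qed

lemma carrier_univ_poly_mono:
  "p \<in> carrier (univ_poly CC K) \<Longrightarrow> K \<subseteq> K' \<Longrightarrow> p \<in> carrier (univ_poly CC K')"
  unfolding univ_poly_carrier[symmetric] polynomial_def by auto

lemma construct:
  assumes d: "d \<ge> 1" and s: "s \<ge> 1"
  defines "n \<equiv> multiplicity (2::nat) (2 * d)"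
  shows "\<exists>Z. number_field Z \<and> has_degree Z (2 * d) \<and>
             cyc (2 ^ (n + 1)) \<subseteq> Z \<and>
             ring.dimension CC ((2 * d) div 2 ^ n) (cyc (2 ^ (n + 1))) Z \<and>
             Fp Z 2 = cyc (2 ^ (n + 1)) \<and>
             v2 (schur_bound s Z) = (n + 1) * s + v2 (fact s)"
proof -
  interpret C: field CC by (rule field_CC)
  have n1: "n \<ge> 1" unfolding n_def by (rule mult2_ge1[OF d])
  define d' where "d' = (2 * d) div 2 ^ n"
  have ndvd: "2 ^ n dvd 2 * d" unfolding n_def by (rule multiplicity_dvd)
  have dd: "2 ^ n * d' = 2 * d" unfolding d'_def using ndvd by simp
  have d'1: "d' \<ge> 1" using dd d by (cases d') auto
  have odd: "\<not> 2 dvd d'"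
  proof
    assume "2 dvd d'"
    then have "2 ^ (n+1) dvd 2 ^ n * d'" by (simp add: mult_dvd_mono)
    then have "2 ^ (n+1) dvd 2 * d" using dd by simp
    then have "n + 1 \<le> n" unfolding n_def using d by (intro multiplicity_geI) simp_all
    then show False by simp
  qed
  define K0 where "K0 = cyc (2 ^ (n + 1))"
  have K0: "subfield K0 CC" unfolding K0_def by (rule cyc_subfield)
  have QK0: "\<rat> \<subseteq> K0" unfolding K0_def by (rule Rats_cyc)
  have dK0: "C.dimension (2^n) \<rat> K0" unfolding K0_def by (rule cyc2_dim)
  define \<alpha> where "\<alpha> = alpha d'"
  have xc: "\<alpha> \<in> carrier CC" by simp
  define f :: "rat poly" where "f = monom 1 d' - 2"
  have cf: "coeff f d' = 1" unfolding f_def using d'1 by (simp add: coeff_monom coeff_diff numeral_poly coeff_pCons')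
  then have f0: "f \<noteq> 0" by auto
  have r: "root d' 2 ^ d' = (2::real)" using d'1 by (intro real_root_pow_pos2) auto
  have "\<alpha>^d' = 2" unfolding \<alpha>_def alpha_def of_real_power[symmetric] r by simp
  then have fx: "poly (map_poly of_rat f) \<alpha> = 0"
    unfolding f_def by (simp add: hom_distribs poly_monom)
  have algQ: "(C.algebraic over \<rat>) \<alpha>" using alg_simple_ext(3)[OF f0 fx] by (auto simp: over_def)
  have alg: "(C.algebraic over K0) \<alpha>" by (rule C.algebraic_mono[OF QK0 algQ])
  define Z where "Z = C.simple_extension K0 \<alpha>"
  have Z: "subfield Z CC" unfolding Z_def using C.simple_extension_is_subfield[OF K0 xc] alg by simp
  define r where "r = length (C.Irr K0 \<alpha>) - 1"
  have dr: "C.dimension r K0 Z" unfolding Z_def r_def by (rule C.dimension_simple_extension[OF K0 xc alg])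
  note L = list_of_ratpoly[OF f0]
  have LK0: "rev (map of_rat (coeffs f)) \<in> carrier (univ_poly CC K0)"
    by (rule carrier_univ_poly_mono[OF L(1) QK0])
  have rle: "r \<le> d'"
  proof -
    note I = C.IrrE[OF K0 xc alg]
    have "(C.Irr K0 \<alpha>) pdivides\<^bsub>CC\<^esub> (rev (map of_rat (coeffs f)))"
      by (rule C.Irr_minimal[OF K0 xc alg LK0]) (simp add: L(4) fx)
    from C.pdivides_imp_degree_le[OF subfieldE(1)[OF K0] I(1) LK0 L(2) this]
    have "r \<le> degree f" using L(3) unfolding r_def by simp
    also have "degree f = d'"
    proof (rule antisym)
      show "degree f \<le> d'" unfolding f_def
        by (rule degree_le) (auto simp: coeff_monom coeff_diff numeral_poly coeff_pCons')
      show "d' \<le> degree f" using cf by (intro le_degree) simp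
    qed
    finally show ?thesis .
  qed
  have dZ: "C.dimension (2^n * r) \<rat> Z" by (rule C.telescopic_base[OF subfield_Rats K0 dK0 dr])
  define Qa where "Qa = C.simple_extension \<rat> \<alpha>"
  have Qa: "subfield Qa CC" unfolding Qa_def by (rule alg_simple_ext(1)[OF f0 fx])
  have dQa: "C.dimension d' \<rat> Qa" unfolding Qa_def \<alpha>_def by (rule alpha_dim[OF d'1])
  have QaZ: "Qa \<subseteq> Z" unfolding Qa_def Z_def by (rule C.mono_simple_extension[OF QK0])
  have QQa: "\<rat> \<subseteq> Qa" unfolding Qa_def by (rule C.simple_extension_incl) simp_all
  obtain a b where a: "C.dimension a \<rat> Qa" and ab: "2^n * r = a * b"
    by (rule tower[OF subfield_Rats Qa Z QQa QaZ dZ])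
  have "a = d'" by (rule C.dimension_is_inj[OF subfield_Rats a dQa])
  with ab have "d' dvd 2^n * r" by simp
  moreover have "coprime d' (2^n)" using odd by (simp add: coprime_power_right_iff coprime_right_2_iff_odd)
  ultimately have "d' dvd r" by (simp add: coprime_dvd_mult_right_iff)
  moreover have "r \<noteq> 0"
  proof
    assume "r = 0"
    with dr have "C.dimension 0 K0 Z" by simp
    then have "Z = {\<zero>\<^bsub>CC\<^esub>}" by (rule C.dimension_zero[OF K0])
    with subfieldD(1)[OF Z] show False by simp
  qed
  ultimately have "d' \<le> r" by (simp add: dvd_imp_le)
  with rle have rd: "r = d'" by simp
  have degZ: "has_degree Z (2 * d)" unfolding has_degree_def using dZ rd dd by simp
  have NF: "number_field Z" unfolding number_field_def using Z dZ by blast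
  have K0Z: "K0 \<subseteq> Z" unfolding Z_def by (rule C.simple_extension_incl) (simp_all)
  have dimK0Z: "C.dimension ((2 * d) div 2 ^ n) K0 Z" using dr rd unfolding d'_def by simp
  obtain e j where e: "ring.dimension CC (2^e) \<rat> (Fp Z 2)" and en: "e \<le> n"
    and m: "m_idx Z 2 = e + j + 1" and t: "t_idx Z 2 = 2^j"
    using two_analysis[OF NF degZ d] unfolding n_def by blast
  have K0F: "K0 \<subseteq> Fp Z 2" unfolding Fp_def K0_def using K0Z unfolding K0_def
    using cyc_inf_memI[of _ 2 "n+1"] by blast
  have "2^n \<le> (2::nat)^e" by (rule dim_mono[OF subfield_Rats dK0 e K0F])
  then have "n \<le> e" by simp
  with en have en': "e = n" by simp
  have FK0: "Fp Z 2 = K0" using dim_eq[OF subfield_Rats dK0 _ K0F] e en' by simp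
  have "m_idx Z 2 \<le> n + 1"
  proof (rule m_idx_props(4)[OF e])
    show "Fp Z 2 \<subseteq> cyc (2 ^ (n + 1))" using FK0 unfolding K0_def by simp
    have "(2::nat) ^ (n+1) \<ge> 2 ^ 2" using n1 by (intro power_increasing) simp_all
    then show "(2::nat) ^ (n + 1) \<noteq> 2" using n1 by auto
  qed simp_all
  with m en' have j0: "j = 0" by simp
  have V: "v2 (schur_bound s Z) = (n + 1) * s + v2 (fact s)"
    using v2_schur[OF schur_finite[OF NF degZ d s]] t m j0 en' by simp
  show ?thesis
    using NF degZ K0Z dimK0Z FK0 V unfolding K0_def by blast
qed

theorem mainTheorem17:
  fixes s d :: nat
  assumes "s \<ge> 1" and "d \<ge> 1"
  defines "n \<equiv> multiplicity (2::nat) (2 * d)"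
  shows "(\<exists>Z. number_field Z \<and> has_degree Z (2 * d) \<and>
             cyc (2 ^ (n + 1)) \<subseteq> Z \<and>
             ring.dimension CC ((2 * d) div 2 ^ n) (cyc (2 ^ (n + 1))) Z \<and>
             Fp Z 2 = cyc (2 ^ (n + 1)) \<and>
             (\<forall>Z'. number_field Z' \<and> has_degree Z' (2 * d) \<longrightarrow>
                multiplicity (2::nat) (schur_bound s Z') \<le> multiplicity (2::nat) (schur_bound s Z)))
       \<and> (\<forall>Z. number_field Z \<and> has_degree Z (2 * d) \<and>
             (\<forall>Z'. number_field Z' \<and> has_degree Z' (2 * d) \<longrightarrow>
                multiplicity (2::nat) (schur_bound s Z') \<le> multiplicity (2::nat) (schur_bound s Z))
             \<longrightarrow> Fp Z 2 = cyc (2 ^ (n + 1)))"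
proof -
  obtain Z0 where Z0: "number_field Z0" "has_degree Z0 (2 * d)" "cyc (2 ^ (n + 1)) \<subseteq> Z0"
      "ring.dimension CC ((2 * d) div 2 ^ n) (cyc (2 ^ (n + 1))) Z0"
      "Fp Z0 2 = cyc (2 ^ (n + 1))" and V0: "v2 (schur_bound s Z0) = (n + 1) * s + v2 (fact s)"
    using construct[OF assms(2,1)] unfolding n_def by blast
  have bound: "v2 (schur_bound s Z') \<le> v2 (schur_bound s Z0)"
    if "number_field Z'" "has_degree Z' (2 * d)" for Z'
    using val_general(1)[OF that assms(2,1)] V0 unfolding n_def by simp
  have part2: "Fp Z 2 = cyc (2 ^ (n + 1))"
    if NF: "number_field Z" and deg: "has_degree Z (2 * d)"
      and mx: "\<forall>Z'. number_field Z' \<and> has_degree Z' (2 * d) \<longrightarrow>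
                multiplicity (2::nat) (schur_bound s Z') \<le> multiplicity (2::nat) (schur_bound s Z)" for Z
  proof -
    have "v2 (schur_bound s Z0) \<le> v2 (schur_bound s Z)" using mx Z0(1,2) by blast
    moreover have "v2 (schur_bound s Z) \<le> (n + 1) * s + v2 (fact s)"
      using val_general(1)[OF NF deg assms(2,1)] unfolding n_def by simp
    ultimately have "v2 (schur_bound s Z) = (multiplicity (2::nat) (2*d) + 1) * s + v2 (fact s)"
      using V0 unfolding n_def by simp
    from val_general(2)[OF NF deg assms(2,1) this] show ?thesis unfolding n_def .
  qed
  show ?thesis
    using Z0 bound part2 by blast
qed

end
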